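(* Assume the Continuum Hypothesis. Every real Banach space $X$ with $\operatorname{dens} X = \operatorname{dens} X^* = \omega_1$ contains an overcomplete set.
   Context: $\operatorname{dens}$ denotes the density character. A subset $S$ of a Banach space $X$ with $|S| = \operatorname{dens} X$ is called overcomplete if every subset $\Lambda \subseteq S$ with $|\Lambda| = |S|$ is linearly dense in $X$ (its closed linear span is $X$). *)

theory Defs
  imports "HOL-Analysis.Analysis"
begin

abbreviation omega1 :: "nat set rel" where
  "omega1 \<equiv> cardSuc natLeq"

definition CH :: bool where
  "CH \<longleftrightarrow> (card_of (UNIV :: real set), omega1) \<in> ordIso"

text \<open>dens_is TYPE('a) r: the density character of the whole space 'a (the least cardinality
  of a dense subset) equals the cardinal r.\<close>
definition dens_is :: "('a::topological_space) itself \<Rightarrow> 'b rel \<Rightarrow> bool" where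
  "dens_is _ r \<longleftrightarrow>
     (\<exists>D::'a set. closure D = UNIV \<and> (card_of D, r) \<in> ordIso) \<and>
     (\<forall>D::'a set. closure D = UNIV \<longrightarrow> (r, card_of D) \<in> ordLeq)"

definition overcomplete :: "('a::real_normed_vector) set \<Rightarrow> bool" where
  "overcomplete S \<longleftrightarrow> dens_is TYPE('a) (card_of S) \<and>
     (\<forall>\<Lambda>\<subseteq>S. (card_of \<Lambda>, card_of S) \<in> ordIso \<longrightarrow> closure (span \<Lambda>) = UNIV)"

end

theory Submission
  imports Defs "HOL-Library.Countable_Set_Type"
begin

definition goodg :: "real \<Rightarrow> ('a::real_normed_vector \<times> real) set \<Rightarrow> bool" where
 "goodg c G \<longleftrightarrow> (\<forall>x a b. (x,a)\<in>G \<longrightarrow> (x,b)\<in>G \<longrightarrow> a=b) \<and> (0,0)\<in>G \<and>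
    (\<forall>x a y b. (x,a)\<in>G \<longrightarrow> (y,b)\<in>G \<longrightarrow> (x+y,a+b)\<in>G) \<and>
    (\<forall>x a r. (x,a)\<in>G \<longrightarrow> (r *\<^sub>R x, r*a)\<in>G) \<and> (\<forall>x a. (x,a)\<in>G \<longrightarrow> a \<le> c * norm x)"

lemma goodg_step:
  fixes G :: "('a::real_normed_vector \<times> real) set"
  assumes c0: "c \<ge> 0" and g: "goodg c G" and x: "x \<notin> fst ` G"
  shows "\<exists>G'. goodg c G' \<and> G \<subseteq> G' \<and> x \<in> fst ` G'"
proof -
  have fnc: "\<And>x a b. (x,a)\<in>G \<Longrightarrow> (x,b)\<in>G \<Longrightarrow> a=b" and z: "(0,0)\<in>G"
    and add: "\<And>x a y b. (x,a)\<in>G \<Longrightarrow> (y,b)\<in>G \<Longrightarrow> (x+y,a+b)\<in>G"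
    and sc: "\<And>x a r. (x,a)\<in>G \<Longrightarrow> (r *\<^sub>R x, r*a)\<in>G"
    and bd: "\<And>x a. (x,a)\<in>G \<Longrightarrow> a \<le> c * norm x"
    using g unfolding goodg_def by blast+
  define A where "A = (\<lambda>(u,a). a - c * norm (u - x)) ` G"
  have key: "a - c * norm (u - x) \<le> c * norm (w + x) - b" if "(u,a)\<in>G" "(w,b)\<in>G" for u a w b
  proof -
    have "a + b \<le> c * norm (u + w)" using bd[OF add[OF that]] .
    also have "c * norm (u + w) \<le> c * (norm (u - x) + norm (w + x))"
    proof -
      have "norm (u + w) \<le> norm (u - x) + norm (w + x)"
        using norm_triangle_ineq[of "u - x" "w + x"] by simp
      moreover note c0
      ultimately show ?thesis by (simp add: mult_left_mono)
    qed
    finally show ?thesis by (simp add: algebra_simps)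
  qed
  have Ane: "A \<noteq> {}" using z unfolding A_def by blast
  have Abdd: "bdd_above A" unfolding A_def bdd_above_def
    using key[OF _ z] by fastforce
  define s where "s = Sup A"
  have s_ge: "a - c * norm (u - x) \<le> s" if "(u,a)\<in>G" for u a
    unfolding s_def by (rule cSup_upper[OF _ Abdd]) (use that A_def in force)
  have s_le: "s \<le> c * norm (w + x) - b" if "(w,b)\<in>G" for w b
    unfolding s_def by (rule cSup_least[OF Ane]) (use key that A_def in force)
  define G' where "G' = {(v + t *\<^sub>R x, b + t * s) | v b t. (v,b)\<in>G}"
  have inG: "(v, b)\<in>G \<Longrightarrow> (v + t *\<^sub>R x, b + t * s) \<in> G'" for v b t
    unfolding G'_def by blast
  have "goodg c G'"
    unfolding goodg_def
  proof (intro conjI allI impI)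
    fix y a1 a2 assume "(y,a1)\<in>G'" "(y,a2)\<in>G'"
    then obtain v b t v' b' t' where 1: "(y,a1) = (v + t *\<^sub>R x, b + t * s)" "(v,b)\<in>G"
      and 2: "(y,a2) = (v' + t' *\<^sub>R x, b' + t' * s)" "(v',b')\<in>G"
      unfolding G'_def by blast
    have tt: "t = t'"
    proof (rule ccontr)
      assume "t \<noteq> t'"
      have "v + t *\<^sub>R x = v' + t' *\<^sub>R x" using 1 2 by simp
      hence "(t - t') *\<^sub>R x = v' - v" by (simp add: algebra_simps)
      moreover have "x = (1/(t-t')) *\<^sub>R ((t - t') *\<^sub>R x)" using \<open>t\<noteq>t'\<close> by simp
      ultimately have "x = (1/(t-t')) *\<^sub>R (v' + (-1) *\<^sub>R v)" by simp
      moreover have "((1/(t-t')) *\<^sub>R (v' + (-1) *\<^sub>R v), (1/(t-t')) * (b' + (-1) * b)) \<in> G"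
        using sc[OF add[OF 2(2) sc[OF 1(2)]]] .
      ultimately show False using x by force
    qed
    hence "v = v'" using 1 2 by simp
    hence "b = b'" using fnc 1 2 by blast
    thus "a1 = a2" using 1 2 tt by simp
  next
    show "(0,0)\<in>G'" using inG[OF z, of 0] by simp
  next
    fix y a y' a' assume "(y,a)\<in>G'" "(y',a')\<in>G'"
    then obtain v b t v' b' t' where 1: "(y,a) = (v + t *\<^sub>R x, b + t * s)" "(v,b)\<in>G"
      and 2: "(y',a') = (v' + t' *\<^sub>R x, b' + t' * s)" "(v',b')\<in>G"
      unfolding G'_def by blast
    have "(v + v' + (t + t') *\<^sub>R x, (b + b') + (t+t') * s) \<in> G'" using inG[OF add[OF 1(2) 2(2)]] .
    thus "(y + y', a + a') \<in> G'" using 1 2 by (simp add: algebra_simps)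
  next
    fix y a r assume "(y,a)\<in>G'"
    then obtain v b t where 1: "(y,a) = (v + t *\<^sub>R x, b + t * s)" "(v,b)\<in>G"
      unfolding G'_def by blast
    have "(r *\<^sub>R v + (r * t) *\<^sub>R x, r * b + (r * t) * s) \<in> G'" using inG[OF sc[OF 1(2)]] .
    thus "(r *\<^sub>R y, r * a) \<in> G'" using 1 by (simp add: algebra_simps)
  next
    fix y a assume "(y,a)\<in>G'"
    then obtain v b t where 1: "y = v + t *\<^sub>R x" "a = b + t * s" "(v,b)\<in>G"
      unfolding G'_def by blast
    consider "t = 0" | "t > 0" | "t < 0" by linarith
    thus "a \<le> c * norm y"
    proof cases
      case 1 thus ?thesis using \<open>y = _\<close> \<open>a = _\<close> bd[OF \<open>(v,b)\<in>G\<close>] by simp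
    next
      case 2
      have "s \<le> c * norm ((1/t) *\<^sub>R v + x) - (1/t) * b" using s_le[OF sc[OF \<open>(v,b)\<in>G\<close>]] .
      hence "t * s \<le> t * (c * norm ((1/t) *\<^sub>R v + x) - (1/t) * b)" using 2 by (simp add: mult_left_mono)
      also have "\<dots> = c * (t * norm ((1/t) *\<^sub>R v + x)) - b" using 2 by (simp add: field_simps)
      also have "t * norm ((1/t) *\<^sub>R v + x) = norm (t *\<^sub>R ((1/t) *\<^sub>R v + x))" using 2 by simp
      also have "t *\<^sub>R ((1/t) *\<^sub>R v + x) = y" using 2 \<open>y = _\<close> by (simp add: algebra_simps)
      finally show ?thesis using \<open>a = _\<close> by simp
    next
      case 3
      define r where "r = -t"
      have r: "r > 0" using 3 r_def by simp
      have "(1/r) * b - c * norm ((1/r) *\<^sub>R v - x) \<le> s" using s_ge[OF sc[OF \<open>(v,b)\<in>G\<close>]] .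
      hence "r * ((1/r) * b - c * norm ((1/r) *\<^sub>R v - x)) \<le> r * s" using r by (simp add: mult_left_mono)
      moreover have "r * ((1/r) * b - c * norm ((1/r) *\<^sub>R v - x)) = b - c * (r * norm ((1/r) *\<^sub>R v - x))"
        using r by (simp add: algebra_simps)
      ultimately have "b - c * (r * norm ((1/r) *\<^sub>R v - x)) \<le> r * s" by simp
      also have "r * norm ((1/r) *\<^sub>R v - x) = norm (r *\<^sub>R ((1/r) *\<^sub>R v - x))" using r by simp
      also have "r *\<^sub>R ((1/r) *\<^sub>R v - x) = y" using r \<open>y = _\<close> r_def by (simp add: algebra_simps)
      finally show ?thesis using \<open>a = _\<close> r_def by simp
    qed
  qed
  moreover have "G \<subseteq> G'" using inG[of _ _ 0] by auto
  moreover have "x \<in> fst ` G'" using inG[OF z, of 1] by force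
  ultimately show ?thesis by blast
qed

lemma goodg_chain:
  assumes "C \<noteq> {}" "\<And>G. G \<in> C \<Longrightarrow> goodg c G" "chain\<^sub>\<subseteq> C"
  shows "goodg c (\<Union>C)"
proof -
  have two: "\<exists>G\<in>C. p \<in> G \<and> q \<in> G" if pq: "p \<in> \<Union>C" "q \<in> \<Union>C" for p q
  proof -
    obtain G1 G2 where "G1\<in>C" "G2\<in>C" "p\<in>G1" "q\<in>G2" using pq by blast
    thus ?thesis using assms(3) unfolding chain_subset_def by blast
  qed
  obtain G where "G\<in>C" using assms(1) by blast
  show ?thesis unfolding goodg_def
  proof (intro conjI allI impI)
    fix x a b assume "(x,a)\<in>\<Union>C" "(x,b)\<in>\<Union>C"
    then obtain H where "H\<in>C" "(x,a)\<in>H" "(x,b)\<in>H" using two by blast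
    thus "a = b" using assms(2)[OF \<open>H\<in>C\<close>] unfolding goodg_def by blast
  next
    show "(0,0)\<in>\<Union>C" using assms(2)[OF \<open>G\<in>C\<close>] \<open>G\<in>C\<close> unfolding goodg_def by blast
  next
    fix x a y b assume "(x,a)\<in>\<Union>C" "(y,b)\<in>\<Union>C"
    then obtain H where "H\<in>C" "(x,a)\<in>H" "(y,b)\<in>H" using two by blast
    thus "(x+y,a+b)\<in>\<Union>C" using assms(2)[OF \<open>H\<in>C\<close>] unfolding goodg_def by blast
  next
    fix x a r assume "(x,a)\<in>\<Union>C"
    then obtain H where "H\<in>C" "(x,a)\<in>H" by blast
    thus "(r *\<^sub>R x, r*a)\<in>\<Union>C" using assms(2)[OF \<open>H\<in>C\<close>] unfolding goodg_def by blast
  next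
    fix x a assume "(x,a)\<in>\<Union>C"
    then obtain H where "H\<in>C" "(x,a)\<in>H" by blast
    thus "a \<le> c * norm x" using assms(2)[OF \<open>H\<in>C\<close>] unfolding goodg_def by blast
  qed
qed

lemma goodg_extend:
  fixes G0 :: "('a::real_normed_vector \<times> real) set"
  assumes c0: "c \<ge> 0" and g0: "goodg c G0"
  shows "\<exists>f. bounded_linear f \<and> (\<forall>x a. (x,a)\<in>G0 \<longrightarrow> f x = a)"
proof -
  define A where "A = {G. goodg c G \<and> G0 \<subseteq> G}"
  have chub: "\<forall>C\<in>chains A. \<exists>U\<in>A. \<forall>X\<in>C. X \<subseteq> U"
  proof
    fix C assume C: "C \<in> chains A"
    show "\<exists>U\<in>A. \<forall>X\<in>C. X \<subseteq> U"
    proof (cases "C = {}")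
      case True thus ?thesis using g0 A_def by auto
    next
      case False
      have CA: "C \<subseteq> A" and ch: "chain\<^sub>\<subseteq> C" using C unfolding chains_def by auto
      have "goodg c (\<Union>C)" by (rule goodg_chain[OF False _ ch]) (use CA A_def in blast)
      moreover have "G0 \<subseteq> \<Union>C" using False CA unfolding A_def by blast
      ultimately show ?thesis unfolding A_def by blast
    qed
  qed
  obtain M where M: "M \<in> A" and max0: "\<forall>X\<in>A. M \<subseteq> X \<longrightarrow> X = M"
    using Zorn_Lemma2[OF chub] by (elim bexE)
  have max: "\<And>X. X\<in>A \<Longrightarrow> M \<subseteq> X \<Longrightarrow> X = M" using max0 by simp
  have gM: "goodg c M" and sub: "G0 \<subseteq> M" using M A_def by auto
  have tot: "x \<in> fst ` M" for x
  proof (rule ccontr)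
    assume "x \<notin> fst ` M"
    then obtain G' where "goodg c G'" "M \<subseteq> G'" "x \<in> fst ` G'" using goodg_step[OF c0 gM] by blast
    moreover have "G' \<in> A" using \<open>goodg c G'\<close> \<open>M \<subseteq> G'\<close> sub unfolding A_def by blast
    ultimately have "G' = M" using max by blast
    thus False using \<open>x \<in> fst ` G'\<close> \<open>x \<notin> fst ` M\<close> by simp
  qed
  have fnc: "\<And>x a b. (x,a)\<in>M \<Longrightarrow> (x,b)\<in>M \<Longrightarrow> a=b"
    and add: "\<And>x a y b. (x,a)\<in>M \<Longrightarrow> (y,b)\<in>M \<Longrightarrow> (x+y,a+b)\<in>M"
    and sc: "\<And>x a r. (x,a)\<in>M \<Longrightarrow> (r *\<^sub>R x, r*a)\<in>M"
    and bd: "\<And>x a. (x,a)\<in>M \<Longrightarrow> a \<le> c * norm x"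
    using gM unfolding goodg_def by blast+
  define f where "f x = (THE a. (x,a)\<in>M)" for x
  have fM: "(x, f x) \<in> M" for x
  proof -
    obtain a where "(x,a)\<in>M" using tot[of x] by force
    hence "(THE a. (x,a)\<in>M) = a" by (rule the_equality) (use fnc \<open>(x,a)\<in>M\<close> in blast)
    thus ?thesis using \<open>(x,a)\<in>M\<close> f_def by simp
  qed
  have fv: "(x,a)\<in>M \<Longrightarrow> f x = a" for x a using fnc fM by blast
  have "bounded_linear f"
  proof (rule bounded_linear_intro)
    show "f (x + y) = f x + f y" for x y using fv[OF add[OF fM fM]] .
    show "f (r *\<^sub>R x) = r *\<^sub>R f x" for r x using fv[OF sc[OF fM]] by simp
    show "norm (f x) \<le> norm x * c" for x
    proof -
      have "f x \<le> c * norm x" using bd[OF fM] .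
      moreover have "- f x \<le> c * norm x" using bd[OF sc[OF fM[of x], of "-1"]] by simp
      ultimately show ?thesis by (simp add: abs_le_iff mult.commute)
    qed
  qed
  thus ?thesis using fv sub by blast
qed

lemma hb_sep:
  fixes L :: "'a::real_normed_vector set"
  assumes "closure (span L) \<noteq> UNIV"
  shows "\<exists>g::'a \<Rightarrow>\<^sub>L real. g \<noteq> 0 \<and> (\<forall>z\<in>L. blinfun_apply g z = 0)"
proof -
  obtain x0 where x0: "x0 \<notin> closure (span L)" using assms by blast
  have x0s: "x0 \<notin> span L" using x0 closure_subset by blast
  define d where "d = infdist x0 (closure (span L))"
  have d: "d > 0" unfolding d_def
    by (rule infdist_pos_not_in_closed) (use x0 span_zero closure_subset in auto)
  have dle: "d \<le> norm (x0 - z)" if "z \<in> span L" for z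
  proof -
    have "d \<le> dist x0 z" unfolding d_def by (rule infdist_le) (use that closure_subset in blast)
    thus ?thesis by (simp add: dist_norm)
  qed
  define G0 where "G0 = {(z + t *\<^sub>R x0, t) | z t. z \<in> span L}"
  have inG: "z \<in> span L \<Longrightarrow> (z + t *\<^sub>R x0, t) \<in> G0" for z t unfolding G0_def by blast
  have "goodg (1/d) G0" unfolding goodg_def
  proof (intro conjI allI impI)
    fix y a b assume "(y,a)\<in>G0" "(y,b)\<in>G0"
    then obtain z z' where 1: "y = z + a *\<^sub>R x0" "z \<in> span L" and 2: "y = z' + b *\<^sub>R x0" "z' \<in> span L"
      unfolding G0_def by blast
    show "a = b"
    proof (rule ccontr)
      assume ab: "a \<noteq> b"
      have "(a - b) *\<^sub>R x0 = z' - z" using 1 2 by (simp add: algebra_simps)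
      moreover have "x0 = (1/(a-b)) *\<^sub>R ((a - b) *\<^sub>R x0)" using ab by simp
      ultimately have "x0 = (1/(a-b)) *\<^sub>R (z' - z)" by simp
      moreover have "(1/(a-b)) *\<^sub>R (z' - z) \<in> span L"
        using 1 2 by (simp add: span_diff span_scale)
      ultimately show False using x0s by simp
    qed
  next
    show "(0,0) \<in> G0" using inG[OF span_zero, of 0] by simp
  next
    fix y a y' b assume "(y,a)\<in>G0" "(y',b)\<in>G0"
    then obtain z z' where 1: "y = z + a *\<^sub>R x0" "z \<in> span L" and 2: "y' = z' + b *\<^sub>R x0" "z' \<in> span L"
      unfolding G0_def by blast
    have "(z + z' + (a + b) *\<^sub>R x0, a + b) \<in> G0" using 1 2 by (intro inG span_add)
    thus "(y + y', a + b) \<in> G0" using 1 2 by (simp add: algebra_simps)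
  next
    fix y a r assume "(y,a)\<in>G0"
    then obtain z where 1: "y = z + a *\<^sub>R x0" "z \<in> span L" unfolding G0_def by blast
    have "(r *\<^sub>R z + (r * a) *\<^sub>R x0, r * a) \<in> G0" using 1 by (intro inG span_scale)
    thus "(r *\<^sub>R y, r * a) \<in> G0" using 1 by (simp add: algebra_simps)
  next
    fix y a assume "(y,a)\<in>G0"
    then obtain z where 1: "y = z + a *\<^sub>R x0" "z \<in> span L" unfolding G0_def by blast
    show "a \<le> 1/d * norm y"
    proof (cases "a > 0")
      case False thus ?thesis using d by (smt (verit) divide_nonneg_nonneg mult_nonneg_nonneg norm_ge_zero)
    next
      case True
      have "- (1/a) *\<^sub>R z \<in> span L" using 1 by (simp add: span_scale span_neg)
      hence "d \<le> norm (x0 - (- (1/a) *\<^sub>R z))" by (rule dle)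
      hence "a * d \<le> a * norm (x0 - (- (1/a) *\<^sub>R z))" using True by (simp add: mult_left_mono)
      also have "a * norm (x0 - (- (1/a) *\<^sub>R z)) = norm (a *\<^sub>R (x0 - (- (1/a) *\<^sub>R z)))" using True by simp
      also have "a *\<^sub>R (x0 - (- (1/a) *\<^sub>R z)) = y" using True 1 by (simp add: algebra_simps)
      finally show ?thesis using d by (simp add: field_simps)
    qed
  qed
  then obtain f where f: "bounded_linear f" and fG: "\<And>x a. (x,a)\<in>G0 \<Longrightarrow> f x = a"
    using goodg_extend[of "1/d" G0] d by auto
  define g where "g = Blinfun f"
  have ga: "blinfun_apply g = f" unfolding g_def using f by (simp add: bounded_linear_Blinfun_apply)
  have "f x0 = 1" using fG[OF inG[OF span_zero, of 1]] by simp
  hence "g \<noteq> 0" using ga by auto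
  moreover have "\<forall>z\<in>L. blinfun_apply g z = 0"
  proof
    fix z assume "z \<in> L"
    hence "(z + 0 *\<^sub>R x0, 0) \<in> G0" by (intro inG span_base)
    thus "blinfun_apply g z = 0" using fG ga by simp
  qed
  ultimately show ?thesis by blast
qed


context includes cardinal_syntax
begin

lemma dens_iso: "dens_is T r \<Longrightarrow> r =o r' \<Longrightarrow> dens_is T r'"
  unfolding dens_is_def
  by (meson ordIso_symmetric ordIso_ordLeq_trans ordIso_transitive)

lemma omega1_Card: "Card_order omega1"
  by (simp add: cardSuc_Card_order natLeq_Card_order)

lemma countable_not_omega1: "countable A \<Longrightarrow> \<not> (omega1 \<le>o |A| )"
proof
  assume "countable A" "omega1 \<le>o |A|"
  hence "omega1 \<le>o natLeq" using countable_card_le_natLeq ordLeq_transitive by blast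
  moreover have "natLeq <o omega1" by (simp add: cardSuc_greater natLeq_Card_order)
  ultimately show False using not_ordLess_ordLeq by blast
qed

lemma uncountable_omega1: "\<not> countable A \<Longrightarrow> omega1 \<le>o |A|"
proof -
  assume "\<not> countable A"
  hence "\<not> |A| \<le>o natLeq" using countable_card_le_natLeq by blast
  hence "natLeq <o |A|"
    using not_ordLeq_iff_ordLess[OF natLeq_Well_order card_of_Well_order] by blast
  thus ?thesis using cardSuc_ordLess_ordLeq[OF natLeq_Card_order card_of_Card_order] by blast
qed

lemma countable_under: "a \<in> Field omega1 \<Longrightarrow> countable (under omega1 a)"
proof -
  assume a: "a \<in> Field omega1"
  have "|underS omega1 a| <o omega1" by (rule card_of_underS[OF omega1_Card a])
  hence "|underS omega1 a| \<le>o natLeq"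
    using cardSuc_ordLeq_ordLess[OF natLeq_Card_order card_of_Card_order] by blast
  hence "countable (underS omega1 a)" using countable_card_le_natLeq by blast
  moreover have "under omega1 a \<subseteq> underS omega1 a \<union> {a}" unfolding under_def underS_def by blast
  ultimately show ?thesis by (meson countable_Un countable_empty countable_insert countable_subset)
qed

lemma dens_card_le:
  assumes ch: "CH" and dn: "dens_is TYPE('b::metric_space) omega1"
  shows "|UNIV::'b set| \<le>o omega1"
proof -
  obtain D :: "'b set" where D: "closure D = UNIV" "|D| =o omega1" using dn unfolding dens_is_def by blast
  have r1: "omega1 =o |UNIV::real set|" using ch unfolding CH_def by (rule ordIso_symmetric)
  have r2: "|UNIV::real set| =o |UNIV::nat set set|"
    using nat_sets_eqpoll_reals unfolding eqpoll_iff_card_of_ordIso by (rule ordIso_symmetric)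
  have "|D| =o |UNIV::nat set set|" by (rule ordIso_transitive[OF ordIso_transitive[OF D(2) r1] r2])
  hence "|D| \<le>o |UNIV::nat set set|" using ordIso_iff_ordLeq by auto
  then obtain e :: "'b \<Rightarrow> nat set" where e: "inj_on e D" using card_of_ordLeq[of D "UNIV::nat set set", THEN iffD2] by auto
  have ex: "\<exists>d. d\<in>D \<and> dist d x < 1 / real (Suc n)" for x n
  proof -
    have "x \<in> closure D" using D(1) by simp
    hence all: "\<forall>e>0. \<exists>y\<in>D. dist y x < e" using closure_approachable[of x D] by simp
    have pos: "(0::real) < 1 / real (Suc n)" by simp
    show ?thesis using all pos by blast
  qed
  define phi where "phi x n = (SOME d. d\<in>D \<and> dist d x < 1 / real (Suc n))" for x n
  have phi: "phi x n \<in> D" "dist (phi x n) x < 1 / real (Suc n)" for x n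
    using someI_ex[OF ex[of x n]] unfolding phi_def by auto
  define psi where "psi x = {prod_encode (n, m) | n m. m \<in> e (phi x n)}" for x
  have psi_mem: "prod_encode (n,m) \<in> psi x \<longleftrightarrow> m \<in> e (phi x n)" for x n m
    unfolding psi_def by (auto simp: prod_encode_eq)
  have "inj psi"
  proof (rule injI)
    fix x y assume "psi x = psi y"
    have "e (phi x n) = e (phi y n)" for n
    proof
      show "e (phi x n) \<subseteq> e (phi y n)" using psi_mem[of n _ x] psi_mem[of n _ y] \<open>psi x = psi y\<close> by blast
      show "e (phi y n) \<subseteq> e (phi x n)" using psi_mem[of n _ x] psi_mem[of n _ y] \<open>psi x = psi y\<close> by blast
    qed
    hence eq: "phi x n = phi y n" for n by (rule inj_onD[OF e _ phi(1) phi(1)])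
    show "x = y"
    proof (rule ccontr)
      assume "x \<noteq> y"
      hence dp: "dist x y > 0" by simp
      obtain n where n: "2 / dist x y < real n" using reals_Archimedean2 by blast
      hence "2 / dist x y < real (Suc n)" by simp
      hence lt: "2 / real (Suc n) < dist x y" using dp by (simp add: field_simps)
      have "dist x y \<le> dist (phi x n) x + dist (phi y n) y" using eq[of n] dist_triangle3[of x y "phi x n"]
        by (simp add: dist_commute)
      also have "\<dots> < 2 / real (Suc n)" using phi(2)[of x n] phi(2)[of y n] by simp
      finally show False using lt by simp
    qed
  qed
  hence "|UNIV::'b set| \<le>o |UNIV::nat set set|"
    by (intro card_of_ordLeq[THEN iffD1] exI[of _ psi]) simp
  moreover have "|UNIV::nat set set| =o omega1" using ordIso_symmetric[OF ordIso_transitive[OF r1 r2]] .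
  ultimately show ?thesis using ordLeq_ordIso_trans by blast
qed

end


context includes cardinal_syntax
begin

lemma ker_interior_empty:
  fixes h :: "'a::real_normed_vector \<Rightarrow>\<^sub>L real"
  assumes "h \<noteq> 0"
  shows "interior {x. blinfun_apply h x = 0} = {}"
proof (rule ccontr)
  assume "interior {x. blinfun_apply h x = 0} \<noteq> {}"
  then obtain y where "y \<in> interior {x. blinfun_apply h x = 0}" by blast
  then obtain e where e: "e > 0" "ball y e \<subseteq> {x. blinfun_apply h x = 0}"
    using mem_interior by blast
  have "\<exists>v. blinfun_apply h v \<noteq> 0"
  proof (rule ccontr)
    assume "\<not> (\<exists>v. blinfun_apply h v \<noteq> 0)"
    hence "h = 0" by (intro blinfun_eqI) simp
    thus False using assms by simp
  qed
  then obtain v where v: "blinfun_apply h v \<noteq> 0" by (elim exE)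
  define t where "t = e / (2 * (norm v + 1))"
  have np: "0 < 2 * (norm v + 1)" by (smt (verit) norm_ge_zero)
  have t: "t > 0" unfolding t_def using e(1) np by (rule divide_pos_pos)
  have te: "t * (2 * (norm v + 1)) = e" unfolding t_def using np by simp
  have "norm (t *\<^sub>R v) < e"
  proof -
    have "norm (t *\<^sub>R v) = t * norm v" using t by simp
    also have "\<dots> < t * (2 * (norm v + 1))" using t by (intro mult_strict_left_mono) (smt (verit) norm_ge_zero)+
    finally show ?thesis using te by simp
  qed
  hence "y + t *\<^sub>R v \<in> ball y e" by (simp add: dist_norm)
  hence "y + t *\<^sub>R v \<in> {x. blinfun_apply h x = 0}" using e(2) by (rule subsetD[rotated])
  moreover have "y \<in> {x. blinfun_apply h x = 0}" using e by (intro subsetD[OF e(2)]) simp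
  ultimately have "blinfun_apply h (y + t *\<^sub>R v) = 0" "blinfun_apply h y = 0" by simp_all
  hence "t * blinfun_apply h v = 0" by (simp add: blinfun.add_right blinfun.scaleR_right)
  thus False using t v by simp
qed

lemma baire_avoid:
  fixes C :: "('a::banach \<Rightarrow>\<^sub>L real) set"
  assumes "countable C" "0 \<notin> C"
  shows "\<exists>x. \<forall>h\<in>C. blinfun_apply h x \<noteq> 0"
proof (rule ccontr)
  assume "\<not> ?thesis"
  hence cov: "\<Union> ((\<lambda>h. {x. blinfun_apply h x = 0}) ` C) = UNIV" by blast
  have "euclidean interior_of \<Union> ((\<lambda>h. {x. blinfun_apply h x = 0}) ` C) = {}"
  proof (rule Baire_category_alt)
    show "completely_metrizable_space (euclidean :: 'a topology) \<or>
      locally_compact_space (euclidean :: 'a topology) \<and> regular_space (euclidean :: 'a topology)"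
      using completely_metrizable_space_euclidean by blast
    show "countable ((\<lambda>h. {x. blinfun_apply h x = 0}) ` C)" using assms(1) by simp
    fix T assume "T \<in> (\<lambda>h. {x. blinfun_apply h x = 0}) ` C"
    then obtain h where h: "h \<in> C" "T = {x. blinfun_apply h x = 0}" by blast
    have h0: "h \<noteq> 0" using h(1) assms(2) by auto
    have "closed T" unfolding h(2) by (intro closed_Collect_eq continuous_on_const blinfun.continuous_on continuous_on_id)
    moreover have "interior T = {}" unfolding h(2) by (rule ker_interior_empty) (rule h0)
    ultimately show "closedin euclidean T \<and> euclidean interior_of T = {}"
      using closed_closedin euclidean_interior_of by metis
  qed
  thus False using cov by (simp add: euclidean_interior_of)
qed

lemma nonsep_kernel:
  assumes dn: "dens_is TYPE('a::banach) omega1"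
  shows "\<exists>g::'a \<Rightarrow>\<^sub>L real. g \<noteq> 0 \<and> blinfun_apply g x = 0"
proof -
  have "closure (span {x}) \<noteq> UNIV"
  proof
    assume cs: "closure (span {x}) = UNIV"
    define D where "D = (\<lambda>q. q *\<^sub>R x) ` \<rat>"
    have cD: "countable D" unfolding D_def by (rule countable_image[OF countable_rat])
    have "(\<lambda>q. q *\<^sub>R x) ` closure \<rat> \<subseteq> closure D"
    proof (rule image_closure_subset)
      show "continuous_on (closure \<rat>) (\<lambda>q. q *\<^sub>R x)" by (intro continuous_on_scaleR continuous_on_id continuous_on_const)
      show "closed (closure D)" by simp
      show "(\<lambda>q. q *\<^sub>R x) ` \<rat> \<subseteq> closure D" unfolding D_def by (rule closure_subset)
    qed
    hence "span {x} \<subseteq> closure D" by (simp add: span_singleton Rats_closure_real)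
    hence "closure (span {x}) \<subseteq> closure D" by (rule closure_minimal[OF _ closed_closure])
    hence "UNIV \<subseteq> closure D" using cs by simp
    hence cl: "closure D = UNIV" by blast
    have "\<forall>D::'a set. closure D = UNIV \<longrightarrow> omega1 \<le>o |D|" using dn unfolding dens_is_def by (elim conjE)
    hence "omega1 \<le>o |D|" using cl by blast
    thus False using countable_not_omega1[OF cD] by (elim notE)
  qed
  from hb_sep[OF this] show ?thesis by auto
qed

end

theorem corollary3p2:
  assumes "CH"
    and "dens_is TYPE('a::banach) omega1"
    and "dens_is TYPE('a \<Rightarrow>\<^sub>L real) omega1"
  shows "\<exists>S::'a set. overcomplete S"
proof -
  include cardinal_syntax
  note ch = assms(1) and dX = assms(2) and dXs = assms(3)
  define F where "F = (UNIV :: ('a \<Rightarrow>\<^sub>L real) set) - {0}"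
  have Fle: "|F| \<le>o omega1"
    unfolding F_def by (rule ordLeq_transitive[OF card_of_mono1[OF Diff_subset] dens_card_le[OF ch dXs]])
  have Func: "\<not> countable F"
  proof
    assume cF: "countable F"
    have "(UNIV :: ('a \<Rightarrow>\<^sub>L real) set) = insert 0 F" unfolding F_def by auto
    hence cU: "countable (UNIV :: ('a \<Rightarrow>\<^sub>L real) set)" using countable_insert[OF cF, of 0] by simp
    have "\<forall>D::('a \<Rightarrow>\<^sub>L real) set. closure D = UNIV \<longrightarrow> omega1 \<le>o |D|"
      using dXs unfolding dens_is_def by (elim conjE)
    hence "omega1 \<le>o |UNIV :: ('a \<Rightarrow>\<^sub>L real) set|" by simp
    thus False using countable_not_omega1[OF cU] by (elim notE)
  qed
  have "|F| \<le>o |Field omega1|"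
    by (rule ordLeq_ordIso_trans[OF Fle ordIso_symmetric[OF card_of_Field_ordIso[OF omega1_Card]]])
  then obtain phi :: "('a \<Rightarrow>\<^sub>L real) \<Rightarrow> nat set" where phi: "inj_on phi F" "phi ` F \<subseteq> Field omega1"
    using card_of_ordLeq[of F "Field omega1", THEN iffD2] by auto
  have phiF: "phi g \<in> Field omega1" if "g \<in> F" for g using phi(2) that by (rule subsetD[OF _ imageI])
  have wo: "wo_rel omega1" unfolding wo_rel_def by (rule cardSuc_Well_order[OF natLeq_Card_order])
  have tot: "(phi g, phi h) \<in> omega1 \<or> (phi h, phi g) \<in> omega1" if "g\<in>F" "h\<in>F" for g h
    using wo_rel.TOTALS[OF wo] phiF[OF that(1)] phiF[OF that(2)] by blast
  define B where "B g = {h\<in>F. (phi h, phi g) \<in> omega1}" for g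
  have Bc: "countable (B g)" if "g\<in>F" for g
  proof -
    have "countable (under omega1 (phi g))" by (rule countable_under[OF phiF[OF that]])
    hence "countable {h\<in>F. phi h \<in> under omega1 (phi g)}" by (rule countable_image_inj_gen[OF phi(1)])
    moreover have "{h\<in>F. phi h \<in> under omega1 (phi g)} = B g" unfolding B_def under_def by simp
    ultimately show ?thesis by simp
  qed
  have BF: "B g \<subseteq> F" for g unfolding B_def by auto
  have B0: "0 \<notin> B g" for g using BF[of g] unfolding F_def by auto
  have exx: "\<exists>x. \<forall>h\<in>B g. blinfun_apply h x \<noteq> 0" if "g\<in>F" for g
    by (rule baire_avoid[OF Bc[OF that] B0])
  define xf where "xf g = (SOME x. \<forall>h\<in>B g. blinfun_apply h x \<noteq> 0)" for g
  have xf: "\<forall>h\<in>B g. blinfun_apply h (xf g) \<noteq> 0" if "g\<in>F" for g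
    unfolding xf_def by (rule someI_ex[OF exx[OF that]])
  define S where "S = xf ` F"
  have P1: "countable {s\<in>S. blinfun_apply g s = 0}" if g: "g\<in>F" for g
  proof -
    have "{s\<in>S. blinfun_apply g s = 0} \<subseteq> xf ` B g"
    proof
      fix s assume "s \<in> {s\<in>S. blinfun_apply g s = 0}"
      then obtain h where h: "h\<in>F" "s = xf h" "blinfun_apply g s = 0" unfolding S_def by auto
      have "g \<notin> B h" using xf[OF h(1)] h(2,3) by auto
      hence "(phi g, phi h) \<notin> omega1" using g unfolding B_def by simp
      hence "(phi h, phi g) \<in> omega1" using tot[OF g h(1)] by simp
      hence "h \<in> B g" using h(1) unfolding B_def by simp
      thus "s \<in> xf ` B g" using h(2) by simp
    qed
    thus ?thesis by (rule countable_subset) (rule countable_image[OF Bc[OF g]])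
  qed
  have P2: "\<not> countable S"
  proof
    assume cS: "countable S"
    have fib: "countable {h\<in>F. xf h = s}" for s
    proof -
      obtain g0 :: "'a \<Rightarrow>\<^sub>L real" where g0: "g0 \<noteq> 0" "blinfun_apply g0 s = 0" using nonsep_kernel[OF dX, of s] by (elim exE conjE)
      have g0F: "g0 \<in> F" using g0(1) F_def by simp
      have "{h\<in>F. xf h = s} \<subseteq> B g0"
      proof
        fix h assume "h \<in> {h\<in>F. xf h = s}"
        hence h: "h\<in>F" "xf h = s" by simp_all
        have "g0 \<notin> B h" using xf[OF h(1)] h(2) g0(2) by auto
        hence "(phi g0, phi h) \<notin> omega1" using g0F unfolding B_def by simp
        hence "(phi h, phi g0) \<in> omega1" using tot[OF g0F h(1)] by simp
        thus "h \<in> B g0" using h(1) unfolding B_def by simp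
      qed
      thus ?thesis by (rule countable_subset) (rule Bc[OF g0F])
    qed
    have "F \<subseteq> (\<Union>s\<in>S. {h\<in>F. xf h = s})" unfolding S_def by auto
    moreover have "countable (\<Union>s\<in>S. {h\<in>F. xf h = s})" by (rule countable_UN[OF cS fib])
    ultimately have "countable F" by (rule countable_subset)
    thus False using Func by simp
  qed
  have Siso: "|S| =o omega1"
  proof -
    have "|S| \<le>o |F|" unfolding S_def by (rule card_of_image)
    hence "|S| \<le>o omega1" using Fle by (rule ordLeq_transitive)
    moreover have "omega1 \<le>o |S|" by (rule uncountable_omega1[OF P2])
    ultimately show ?thesis using ordIso_iff_ordLeq by auto
  qed
  have "overcomplete S" unfolding overcomplete_def
  proof (intro conjI allI impI)
    show "dens_is TYPE('a) |S|" by (rule dens_iso[OF dX ordIso_symmetric[OF Siso]])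
    fix L assume L: "L \<subseteq> S" "|L| =o |S|"
    show "closure (span L) = UNIV"
    proof (rule ccontr)
      assume "closure (span L) \<noteq> UNIV"
      from hb_sep[OF this] obtain g :: "'a \<Rightarrow>\<^sub>L real" where g: "g \<noteq> 0" "\<forall>z\<in>L. blinfun_apply g z = 0" by auto
      have gF: "g\<in>F" using g(1) F_def by simp
      have "L \<subseteq> {s\<in>S. blinfun_apply g s = 0}" using L(1) g(2) by auto
      hence cL: "countable L" by (rule countable_subset) (rule P1[OF gF])
      have "omega1 =o |L|" by (rule ordIso_transitive[OF ordIso_symmetric[OF Siso] ordIso_symmetric[OF L(2)]])
      hence "omega1 \<le>o |L|" using ordIso_iff_ordLeq by auto
      thus False using countable_not_omega1[OF cL] by (elim notE)
    qed
  qed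
  thus ?thesis by (rule exI)
qed

end
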